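(* Let $\alpha,\beta\in\mathbb{R}^n_{>}$. Then $\alpha$-GSP has an efficient ex-post equilibrium on type space $\Theta^\beta$ if and only if $n\le 2$ or $k\le 1$; this holds even if $\alpha=\beta$.
   Context: Sponsored search setting: agents $N=\{1,\dots,n\}$, slots $1,\dots,k$ with $k\le n$; an outcome assigns agents to distinct positions, position $j\le k$ meaning slot $j$, others getting nothing (value 0); utilities quasilinear. $\mathbb{R}^n_{>}$: vectors $\alpha$ with $1=\alpha_1>\dots>\alpha_k>0$ and $\alpha_j=0$ for $j>k$. $\Theta^\beta$: type profiles in which each agent $i$ has a value $v_i(\theta_i)\ge0$ (all nonnegative values possible) and values slot $j$ at $\beta_j v_i(\theta_i)$. $\alpha$-GSP: each agent submits $b_i\ge0$ (bid $\alpha_j b_i$ on slot $j$ in GSP); agents are ranked by $b_i$ (ties arbitrary), the rank-$j$ agent ($j\le k$) gets slot $j$ and pays $\alpha_j$ times the $(j+1)$-st highest submitted value ($0$ if none). Incomplete information: a strategy of agent $i$ is a function $s_i$ from its types to submissions $b_i\ge0$. A strategy profile $s$ is an ex-post equilibrium on $\Theta^\beta$ if for every $\theta\in\Theta^\beta$ and every agent $i$, no other submission gives $i$ strictly higher utility against $s_{-i}(\theta_{-i})$; it is efficient if for every $\theta\in\Theta^\beta$ the resulting assignment maximizes total true value. *)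

theory Defs
  imports Main "HOL.Real"
begin

text \<open>Agents are 1..n, slots are 1..k, positions are 1..n (position j \<le> k is slot j).
  Vectors in R^n are functions nat \<Rightarrow> real, read on indices 1..n.\<close>

definition decr_vec :: "nat \<Rightarrow> nat \<Rightarrow> (nat \<Rightarrow> real) \<Rightarrow> bool" where
  "decr_vec n k a \<longleftrightarrow> a 1 = 1 \<and> (\<forall>j. 1 \<le> j \<and> j < k \<longrightarrow> a (Suc j) < a j) \<and> 0 < a k
      \<and> (\<forall>j. k < j \<and> j \<le> n \<longrightarrow> a j = 0)"

text \<open>A (deterministic) tie-breaking rule: maps each bid profile to a ranking of the agents
  (rank r = position r), consistent with the bids and depending only on the bids of agents 1..n.\<close>
definition valid_ranking_rule :: "nat \<Rightarrow> ((nat \<Rightarrow> real) \<Rightarrow> nat \<Rightarrow> nat) \<Rightarrow> bool" where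
  "valid_ranking_rule n rk \<longleftrightarrow>
     (\<forall>b. bij_betw (rk b) {1..n} {1..n}) \<and>
     (\<forall>b i j. i \<in> {1..n} \<and> j \<in> {1..n} \<and> b j < b i \<longrightarrow> rk b i < rk b j) \<and>
     (\<forall>b b'. (\<forall>i\<in>{1..n}. b i = b' i) \<longrightarrow> (\<forall>i\<in>{1..n}. rk b i = rk b' i))"

definition jth_highest :: "nat \<Rightarrow> (nat \<Rightarrow> real) \<Rightarrow> nat \<Rightarrow> real" where
  "jth_highest n b j = (if 1 \<le> j \<and> j \<le> n then rev (sort (map b [1..<Suc n])) ! (j - 1) else 0)"

definition gsp_utility :: "nat \<Rightarrow> nat \<Rightarrow> (nat \<Rightarrow> real) \<Rightarrow> (nat \<Rightarrow> real)
    \<Rightarrow> ((nat \<Rightarrow> real) \<Rightarrow> nat \<Rightarrow> nat) \<Rightarrow> (nat \<Rightarrow> real) \<Rightarrow> nat \<Rightarrow> real \<Rightarrow> real" where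
  "gsp_utility n k \<alpha> \<beta> rk b i x =
     (let r = rk b i in if r \<le> k then \<beta> r * x - \<alpha> r * jth_highest n b (Suc r) else 0)"

definition welfare :: "nat \<Rightarrow> nat \<Rightarrow> (nat \<Rightarrow> real) \<Rightarrow> (nat \<Rightarrow> nat) \<Rightarrow> (nat \<Rightarrow> real) \<Rightarrow> real" where
  "welfare n k \<beta> \<pi> v = (\<Sum>i\<in>{1..n}. if \<pi> i \<le> k then \<beta> (\<pi> i) * v i else 0)"

text \<open>Type profiles in Theta^beta are identified with value profiles v (v i \<ge> 0).\<close>
definition type_profile :: "nat \<Rightarrow> (nat \<Rightarrow> real) \<Rightarrow> bool" where
  "type_profile n v \<longleftrightarrow> (\<forall>i\<in>{1..n}. 0 \<le> v i)"

definition strategy_profile :: "nat \<Rightarrow> (nat \<Rightarrow> real \<Rightarrow> real) \<Rightarrow> bool" where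
  "strategy_profile n s \<longleftrightarrow> (\<forall>i\<in>{1..n}. \<forall>x. 0 \<le> x \<longrightarrow> 0 \<le> s i x)"

definition bids :: "(nat \<Rightarrow> real \<Rightarrow> real) \<Rightarrow> (nat \<Rightarrow> real) \<Rightarrow> nat \<Rightarrow> real" where
  "bids s v = (\<lambda>j. s j (v j))"

definition ex_post_equilibrium :: "nat \<Rightarrow> nat \<Rightarrow> (nat \<Rightarrow> real) \<Rightarrow> (nat \<Rightarrow> real)
    \<Rightarrow> ((nat \<Rightarrow> real) \<Rightarrow> nat \<Rightarrow> nat) \<Rightarrow> (nat \<Rightarrow> real \<Rightarrow> real) \<Rightarrow> bool" where
  "ex_post_equilibrium n k \<alpha> \<beta> rk s \<longleftrightarrow>
     (\<forall>v. type_profile n v \<longrightarrow> (\<forall>i\<in>{1..n}. \<forall>b'. 0 \<le> b' \<longrightarrow>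
        gsp_utility n k \<alpha> \<beta> rk ((bids s v)(i := b')) i (v i)
          \<le> gsp_utility n k \<alpha> \<beta> rk (bids s v) i (v i)))"

definition efficient :: "nat \<Rightarrow> nat \<Rightarrow> (nat \<Rightarrow> real)
    \<Rightarrow> ((nat \<Rightarrow> real) \<Rightarrow> nat \<Rightarrow> nat) \<Rightarrow> (nat \<Rightarrow> real \<Rightarrow> real) \<Rightarrow> bool" where
  "efficient n k \<beta> rk s \<longleftrightarrow>
     (\<forall>v. type_profile n v \<longrightarrow> (\<forall>\<pi>. bij_betw \<pi> {1..n} {1..n} \<longrightarrow>
        welfare n k \<beta> \<pi> v \<le> welfare n k \<beta> (rk (bids s v)) v))"

end

theory Submission imports Defs "HOL-Library.Multiset" begin

lemma decr_mono:
  assumes "decr_vec n k a" "1 \<le> p" "p < q" "q \<le> k"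
  shows "a q < a p"
  using assms(3,4)
proof (induction q)
  case 0 then show ?case by simp
next
  case (Suc q)
  have d: "a (Suc q) < a q" using assms(1,2) Suc.prems unfolding decr_vec_def by auto
  show ?case
  proof (cases "p = q")
    case True then show ?thesis using d by simp
  next
    case False then have "a q < a p" using Suc by auto
    then show ?thesis using d by simp
  qed
qed

lemma decr_pos:
  assumes "decr_vec n k a" "1 \<le> p" "p \<le> k"
  shows "0 < a p"
proof (cases "p = k")
  case True then show ?thesis using assms unfolding decr_vec_def by auto
next
  case False then have "a k < a p" using decr_mono[OF assms(1,2)] assms(3) by simp
  then show ?thesis using assms unfolding decr_vec_def by auto
qed

lemma swap_bij:
  assumes "bij_betw \<pi> S S" "a \<in> S" "t \<in> S"
  shows "bij_betw (\<pi>(a := \<pi> t, t := \<pi> a)) S S"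
proof -
  define f where "f = (\<lambda>x::'a. if x = a then t else if x = t then a else x)"
  have ff: "f (f x) = x" for x unfolding f_def by simp
  have fS: "x \<in> S \<Longrightarrow> f x \<in> S" for x unfolding f_def using assms(2,3) by simp
  have e: "\<pi>(a := \<pi> t, t := \<pi> a) = \<pi> \<circ> f"
    unfolding f_def by (rule ext) simp
  have "inj_on f S" by (metis ff inj_onI)
  moreover have "f ` S = S"
  proof
    show "f ` S \<subseteq> S" using fS by blast
    show "S \<subseteq> f ` S" using fS ff by (metis image_eqI subsetI)
  qed
  ultimately have "bij_betw f S S" unfolding bij_betw_def by blast
  then show ?thesis using assms(1) e bij_betw_trans by metis
qed

lemma sorted_le_last:
  fixes l :: "real list"
  assumes "sorted l" "x \<in> set l"
  shows "x \<le> last l"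
proof -
  have ne: "l \<noteq> []" using assms(2) by auto
  have "l = butlast l @ [last l]" using ne by simp
  then have "sorted (butlast l @ [last l])" using assms(1) by simp
  then have "\<forall>y\<in>set (butlast l). y \<le> last l" by (simp add: sorted_append)
  moreover have "x \<in> set (butlast l @ [last l])"
    using assms(2) \<open>l = butlast l @ [last l]\<close> by simp
  then have "x \<in> set (butlast l) \<or> x = last l" by (cases "x = last l") simp_all
  ultimately show ?thesis by auto
qed

lemma hd_rev_sort:
  fixes b :: "nat \<Rightarrow> real"
  assumes "xs \<noteq> []"
  shows "hd (rev (sort (map b xs))) = Max (b ` set xs)"
proof -
  let ?l = "sort (map b xs)"
  have ne: "?l \<noteq> []" using assms by (metis length_0_conv length_map length_sort)
  have "hd (rev ?l) = last ?l" using ne by (simp add: hd_rev)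
  moreover have "last ?l = Max (b ` set xs)"
  proof (rule Max_eqI[symmetric])
    show "finite (b ` set xs)" by simp
    show "y \<le> last ?l" if "y \<in> b ` set xs" for y
      using sorted_le_last[of ?l y] that by simp
    show "last ?l \<in> b ` set xs" using last_in_set[OF ne] by simp
  qed
  ultimately show ?thesis by simp
qed

lemma filter_single:
  assumes "distinct xs" "p \<in> set xs"
  shows "filter (\<lambda>d. d = p) xs = [p]"
  using assms
proof (induction xs)
  case Nil then show ?case by simp
next
  case (Cons x xs)
  show ?case
  proof (cases "x = p")
    case True
    then have "p \<notin> set xs" using Cons.prems by simp
    then have "filter (\<lambda>d. d = p) xs = []" by (auto simp: filter_empty_conv)
    then show ?thesis using True by simp
  next
    case False then show ?thesis using Cons by simp
  qed
qed

lemma sort_top: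
  fixes b :: "nat \<Rightarrow> real"
  assumes "distinct xs" "p \<in> set xs" "\<forall>d\<in>set xs. b d \<le> b p"
  shows "rev (sort (map b xs)) = b p # rev (sort (map b (filter (\<lambda>d. d \<noteq> p) xs)))"
proof -
  let ?ys = "filter (\<lambda>d. d \<noteq> p) xs"
  have f: "filter (\<lambda>d. \<not> d \<noteq> p) xs = [p]"
    using filter_single[OF assms(1,2)] by simp
  have "mset xs = mset ?ys + mset (filter (\<lambda>d. \<not> d \<noteq> p) xs)"
    by (induction xs) auto
  then have m: "mset xs = mset ?ys + {#p#}" unfolding f by simp
  have "sort (map b xs) = sort (map b ?ys) @ [b p]"
  proof (rule properties_for_sort)
    have "image_mset b (mset xs) = image_mset b (mset ?ys + {#p#})"
      using m by (rule arg_cong)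
    then have "mset (map b xs) = image_mset b (mset ?ys) + {#b p#}"
      by (simp del: mset_filter)
    then show "mset (sort (map b ?ys) @ [b p]) = mset (map b xs)"
      by (simp del: mset_filter)
    have "\<forall>y\<in>set (sort (map b ?ys)). y \<le> b p" using assms(3) by auto
    then show "sorted (sort (map b ?ys) @ [b p])"
      by (simp add: sorted_append)
  qed
  then show ?thesis by simp
qed

lemma others_nonempty:
  fixes n p q :: nat
  assumes "3 \<le> n"
  shows "{1..n} - {p, q} \<noteq> {}"
proof -
  define d where "d = (if 1 \<notin> {p,q} then 1 else if 2 \<notin> {p,q} then 2 else (3::nat))"
  have "d \<notin> {p,q}" unfolding d_def by auto
  moreover have "d \<in> {1..n}" unfolding d_def using assms by auto
  ultimately show ?thesis by blast
qed

lemma H2_top: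
  fixes b :: "nat \<Rightarrow> real"
  assumes "p \<in> {1..n}" "2 \<le> n" "\<forall>d\<in>{1..n}. b d \<le> b p"
  shows "jth_highest n b 2 = Max (b ` ({1..n} - {p}))"
proof -
  define U where "U = [1..<Suc n]"
  define U' where "U' = filter (\<lambda>d. d \<noteq> p) U"
  have sU: "set U = {1..n}" unfolding U_def by auto
  have dU: "distinct U" unfolding U_def by simp
  have pU: "p \<in> set U" using assms(1) sU by simp
  have bU: "\<forall>d\<in>set U. b d \<le> b p" using assms(3) sU by simp
  have st: "rev (sort (map b U)) = b p # rev (sort (map b U'))"
    unfolding U'_def by (rule sort_top[OF dU pU bU])
  have sU': "set U' = {1..n} - {p}" unfolding U'_def set_filter sU by blast
  have ne: "U' \<noteq> []"
  proof
    assume "U' = []"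
    then have "{1..n} - {p} = {}" using sU' by simp
    moreover have "(if p = 1 then 2 else 1) \<in> {1..n} - {p}" using assms(1,2) by auto
    ultimately show False by blast
  qed
  have "jth_highest n b 2 = rev (sort (map b U)) ! 1"
    unfolding jth_highest_def U_def[symmetric] using assms(2) by simp
  also have "\<dots> = rev (sort (map b U')) ! 0"
    unfolding st by simp
  also have "\<dots> = hd (rev (sort (map b U')))"
    by (rule hd_conv_nth[symmetric]) (use ne in \<open>metis Nil_is_rev_conv length_0_conv length_map length_sort\<close>)
  also have "\<dots> = Max (b ` ({1..n} - {p}))"
    using hd_rev_sort[OF ne, of b] sU' by simp
  finally show ?thesis .
qed

lemma H_two_top:
  fixes b :: "nat \<Rightarrow> real"
  assumes "p \<in> {1..n}" "q \<in> {1..n}" "p \<noteq> q" "b q \<le> b p"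
    "\<forall>d\<in>{1..n} - {p, q}. b d \<le> b q"
  shows "jth_highest n b 2 = b q"
    and "3 \<le> n \<Longrightarrow> jth_highest n b 3 = Max (b ` ({1..n} - {p, q}))"
proof -
  define U where "U = [1..<Suc n]"
  let ?U = U
  let ?U' = "filter (\<lambda>d. d \<noteq> p) ?U"
  let ?U'' = "filter (\<lambda>d. d \<noteq> q) ?U'"
  have sU: "set ?U = {1..n}" unfolding U_def by auto
  have dU: "distinct ?U" unfolding U_def by simp
  have bU: "\<forall>d\<in>set ?U. b d \<le> b p"
  proof
    fix d assume "d \<in> set ?U"
    then have d: "d \<in> {1..n}" using sU by simp
    show "b d \<le> b p"
    proof (cases "d = p \<or> d = q")
      case True then show ?thesis using assms(4) by auto
    next
      case False then have "b d \<le> b q" using assms(5) d by auto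
      then show ?thesis using assms(4) by simp
    qed
  qed
  have bU': "\<forall>d\<in>set ?U'. b d \<le> b q"
  proof
    fix d assume "d \<in> set ?U'"
    then have d: "d \<in> {1..n}" "d \<noteq> p" using sU by auto
    show "b d \<le> b q"
    proof (cases "d = q")
      case True then show ?thesis by simp
    next
      case False then show ?thesis using assms(5) d by auto
    qed
  qed
  have st: "rev (sort (map b ?U)) = b p # rev (sort (map b ?U'))"
    by (rule sort_top[OF dU _ bU]) (use assms(1) sU in simp)
  have st2: "rev (sort (map b ?U')) = b q # rev (sort (map b ?U''))"
    by (rule sort_top[OF _ _ bU']) (use assms(2,3) sU dU in simp_all)
  have sU'': "set ?U'' = {1..n} - {p, q}" unfolding set_filter sU by blast
  have n2: "2 \<le> n" using assms(1,2,3) by auto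
  show "jth_highest n b 2 = b q"
    unfolding jth_highest_def U_def[symmetric] using n2 st st2 by simp
  assume n3: "3 \<le> n"
  have ne: "?U'' \<noteq> []"
    using others_nonempty[OF n3, of p q] sU'' by (metis set_empty)
  have "jth_highest n b 3 = rev (sort (map b ?U)) ! 2"
    unfolding jth_highest_def U_def[symmetric] using n3 by simp
  also have "\<dots> = rev (sort (map b ?U'')) ! 0"
    unfolding st st2 by (simp add: numeral_2_eq_2)
  also have "\<dots> = hd (rev (sort (map b ?U'')))"
    by (rule hd_conv_nth[symmetric]) (use ne in \<open>metis Nil_is_rev_conv length_0_conv length_map length_sort\<close>)
  also have "\<dots> = Max (b ` ({1..n} - {p, q}))"
    using hd_rev_sort[OF ne, of b] sU'' by simp
  finally show "jth_highest n b 3 = Max (b ` ({1..n} - {p, q}))" .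
qed

lemma rk_bij: "valid_ranking_rule n rk \<Longrightarrow> bij_betw (rk b) {1..n} {1..n}"
  unfolding valid_ranking_rule_def by blast

lemma rk_in: "valid_ranking_rule n rk \<Longrightarrow> i \<in> {1..n} \<Longrightarrow> rk b i \<in> {1..n}"
  using rk_bij bij_betw_apply by metis

lemma rk_inj: "valid_ranking_rule n rk \<Longrightarrow> i \<in> {1..n} \<Longrightarrow> j \<in> {1..n} \<Longrightarrow> rk b i = rk b j \<Longrightarrow> i = j"
  using rk_bij[of n rk b] unfolding bij_betw_def inj_on_def by blast

lemma rk_surj: "valid_ranking_rule n rk \<Longrightarrow> r \<in> {1..n} \<Longrightarrow> \<exists>a\<in>{1..n}. rk b a = r"
  using rk_bij[of n rk b] unfolding bij_betw_def by (metis imageE)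

lemma rk_lt: "valid_ranking_rule n rk \<Longrightarrow> i \<in> {1..n} \<Longrightarrow> j \<in> {1..n} \<Longrightarrow> b j < b i \<Longrightarrow> rk b i < rk b j"
  unfolding valid_ranking_rule_def by blast

lemma rk1_ge:
  assumes "valid_ranking_rule n rk" "rk b i = 1" "i \<in> {1..n}" "d \<in> {1..n}"
  shows "b d \<le> b i"
proof (rule ccontr)
  assume "\<not> b d \<le> b i"
  then have "rk b d < rk b i" using rk_lt[OF assms(1) assms(4) assms(3)] by simp
  moreover have "rk b d \<in> {1..n}" using rk_in[OF assms(1,4)] .
  ultimately show False using assms(2) by simp
qed

lemma rk2_ge:
  assumes "valid_ranking_rule n rk" "rk b p = 1" "rk b q = 2" "p \<in> {1..n}" "q \<in> {1..n}"
    "d \<in> {1..n}" "d \<noteq> p"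
  shows "b d \<le> b q"
proof (rule ccontr)
  assume "\<not> b d \<le> b q"
  then have "rk b d < rk b q" using rk_lt[OF assms(1) assms(6) assms(5)] by simp
  moreover have "rk b d \<in> {1..n}" using rk_in[OF assms(1,6)] .
  ultimately have "rk b d = rk b p" using assms(2,3) by simp
  then show False using rk_inj[OF assms(1,6,4)] assms(7) by simp
qed

lemma rk_top:
  assumes "valid_ranking_rule n rk" "i \<in> {1..n}" "\<forall>d\<in>{1..n} - {i}. b d < b i"
  shows "rk b i = 1"
proof -
  have "1 \<in> {1..n}" using assms(2) by simp
  then obtain a where a: "a \<in> {1..n}" "rk b a = 1" using rk_surj[OF assms(1)] by blast
  show ?thesis
  proof (cases "a = i")
    case True then show ?thesis using a by simp
  next
    case False
    then have "rk b i < rk b a" using rk_lt[OF assms(1) assms(2) a(1)] assms(3) a(1) by simp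
    then show ?thesis using a rk_in[OF assms(1,2), of b] by simp
  qed
qed

lemma rk_second:
  assumes "valid_ranking_rule n rk" "p \<in> {1..n}" "q \<in> {1..n}" "p \<noteq> q" "b q < b p"
    "\<forall>d\<in>{1..n} - {p, q}. b d < b q"
  shows "rk b q = 2"
proof -
  have pq: "rk b p < rk b q" using rk_lt[OF assms(1,2,3,5)] .
  have rp: "rk b p \<ge> 1" using rk_in[OF assms(1,2)] by simp
  have n2: "2 \<le> n" using assms(2,3,4) by auto
  then obtain a where a: "a \<in> {1..n}" "rk b a = 2" using rk_surj[OF assms(1), of 2 b] by auto
  show ?thesis
  proof (rule ccontr)
    assume ne: "rk b q \<noteq> 2"
    have "a \<noteq> q" using a ne by auto
    show False
    proof (cases "a = p")
      case True
      obtain c where c: "c \<in> {1..n}" "rk b c = 1" using rk_surj[OF assms(1), of 1 b] n2 by auto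
      have "c \<noteq> p" using c True a by auto
      moreover have "c \<noteq> q" using c pq rp by auto
      ultimately have "b c < b q" using assms(6) c by auto
      then have "rk b q < rk b c" using rk_lt[OF assms(1,3) c(1)] by simp
      then show False using c rp pq by simp
    next
      case False
      then have "b a < b q" using assms(6) a \<open>a \<noteq> q\<close> by auto
      then have "rk b q < rk b a" using rk_lt[OF assms(1,3) a(1)] by simp
      then show False using a rp pq by simp
    qed
  qed
qed

lemma welfare_swap:
  assumes "decr_vec n k \<beta>" "bij_betw \<pi> {1..n} {1..n}" "a \<in> {1..n}" "t \<in> {1..n}" "a \<noteq> t"
    "\<pi> a < \<pi> t" "\<pi> a \<le> k" "v a < v t"
  shows "welfare n k \<beta> \<pi> v < welfare n k \<beta> (\<pi>(a := \<pi> t, t := \<pi> a)) v"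
proof -
  define \<sigma> where "\<sigma> = \<pi>(a := \<pi> t, t := \<pi> a)"
  define g where "g = (\<lambda>\<rho> i. if \<rho> i \<le> k then \<beta> (\<rho> i) * v i else 0)"
  have w: "welfare n k \<beta> \<rho> v = sum (g \<rho>) {1..n}" for \<rho> unfolding welfare_def g_def by simp
  have split: "sum (g \<rho>) {1..n} = g \<rho> a + g \<rho> t + sum (g \<rho>) ({1..n} - {a} - {t})" for \<rho>
  proof -
    have "sum (g \<rho>) {1..n} = g \<rho> a + sum (g \<rho>) ({1..n} - {a})"
      using assms(3) by (simp add: sum.remove)
    also have "sum (g \<rho>) ({1..n} - {a}) = g \<rho> t + sum (g \<rho>) ({1..n} - {a} - {t})"
      using assms(4,5) by (simp add: sum.remove)
    finally show ?thesis by simp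
  qed
  have rest: "sum (g \<sigma>) ({1..n} - {a} - {t}) = sum (g \<pi>) ({1..n} - {a} - {t})"
    by (rule sum.cong) (auto simp: g_def \<sigma>_def)
  have p1: "1 \<le> \<pi> a" using bij_betw_apply[OF assms(2) assms(3)] by simp
  have bp: "0 < \<beta> (\<pi> a)" using decr_pos[OF assms(1) p1 assms(7)] .
  have key: "g \<pi> a + g \<pi> t < g \<sigma> a + g \<sigma> t"
  proof (cases "\<pi> t \<le> k")
    case True
    have "\<beta> (\<pi> t) < \<beta> (\<pi> a)" using decr_mono[OF assms(1) p1 assms(6) True] .
    then have "\<beta> (\<pi> t) * (v t - v a) < \<beta> (\<pi> a) * (v t - v a)"
      using assms(8) by (intro mult_strict_right_mono) auto
    then show ?thesis using True assms(5,7) unfolding g_def \<sigma>_def by (simp add: algebra_simps)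
  next
    case False
    have "\<beta> (\<pi> a) * v a < \<beta> (\<pi> a) * v t" using bp assms(8) by simp
    then show ?thesis using False assms(5,7) unfolding g_def \<sigma>_def by simp
  qed
  have w1: "welfare n k \<beta> \<pi> v = g \<pi> a + g \<pi> t + sum (g \<pi>) ({1..n} - {a} - {t})"
    using w split by simp
  have w2: "welfare n k \<beta> \<sigma> v = g \<sigma> a + g \<sigma> t + sum (g \<pi>) ({1..n} - {a} - {t})"
    using w split rest by simp
  show ?thesis using w1 w2 key unfolding \<sigma>_def[symmetric] by linarith
qed

lemma eff_top2:
  assumes R: "valid_ranking_rule n rk" and B: "decr_vec n k \<beta>" and E: "efficient n k \<beta> rk s"
    and T: "type_profile n v" and k2: "2 \<le> k"
    and p: "p \<in> {1..n}" and q: "q \<in> {1..n}" and pq: "p \<noteq> q" and vpq: "v q < v p"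
    and oth: "\<forall>d\<in>{1..n} - {p, q}. v d < v q"
  shows "rk (bids s v) p = 1" and "rk (bids s v) q = 2"
proof -
  let ?b = "bids s v"
  let ?\<pi> = "rk ?b"
  have bij: "bij_betw ?\<pi> {1..n} {1..n}" using rk_bij[OF R] .
  have eff: "\<And>\<sigma>. bij_betw \<sigma> {1..n} {1..n} \<Longrightarrow> welfare n k \<beta> \<sigma> v \<le> welfare n k \<beta> ?\<pi> v"
    using E T unfolding efficient_def by blast
  have lt: False if "a \<in> {1..n}" "t \<in> {1..n}" "a \<noteq> t" "?\<pi> a < ?\<pi> t" "?\<pi> a \<le> k" "v a < v t" for a t
  proof -
    have "welfare n k \<beta> ?\<pi> v < welfare n k \<beta> (?\<pi>(a := ?\<pi> t, t := ?\<pi> a)) v"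
      by (rule welfare_swap[OF B bij that])
    moreover have "bij_betw (?\<pi>(a := ?\<pi> t, t := ?\<pi> a)) {1..n} {1..n}"
      by (rule swap_bij[OF bij that(1,2)])
    ultimately show False using eff by fastforce
  qed
  show P1: "?\<pi> p = 1"
  proof (rule ccontr)
    assume ne: "?\<pi> p \<noteq> 1"
    obtain a where a: "a \<in> {1..n}" "?\<pi> a = 1" using rk_surj[OF R, of 1 ?b] p by auto
    have "a \<noteq> p" using a ne by auto
    moreover have "v a < v p"
    proof (cases "a = q")
      case True then show ?thesis using vpq by simp
    next
      case False then have "v a < v q" using oth a \<open>a \<noteq> p\<close> by auto
      then show ?thesis using vpq by simp
    qed
    moreover have "?\<pi> a < ?\<pi> p" using a ne rk_in[OF R p, of ?b] by auto
    ultimately show False using lt[of a p] a p k2 by auto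
  qed
  show "?\<pi> q = 2"
  proof (rule ccontr)
    assume ne: "?\<pi> q \<noteq> 2"
    have n2: "2 \<le> n" using p q pq by auto
    obtain a where a: "a \<in> {1..n}" "?\<pi> a = 2" using rk_surj[OF R, of 2 ?b] n2 by auto
    have "a \<noteq> p" using a P1 by auto
    have "a \<noteq> q" using a ne by auto
    have "v a < v q" using oth a \<open>a \<noteq> p\<close> \<open>a \<noteq> q\<close> by auto
    moreover have "?\<pi> q \<noteq> 1" using P1 rk_inj[OF R q p, of ?b] pq by auto
    then have "?\<pi> a < ?\<pi> q" using a ne rk_in[OF R q, of ?b] by auto
    ultimately show False using lt[of a q] a q k2 \<open>a \<noteq> q\<close> by auto
  qed
qed

lemma util_rank:
  assumes "rk b i = r" "r \<le> k"
  shows "gsp_utility n k \<alpha> \<beta> rk b i x = \<beta> r * x - \<alpha> r * jth_highest n b (Suc r)"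
  using assms unfolding gsp_utility_def by simp

lemma bids_nonneg:
  assumes "strategy_profile n s" "type_profile n v" "d \<in> {1..n}"
  shows "0 \<le> bids s v d"
  using assms unfolding strategy_profile_def type_profile_def bids_def by blast

lemma lower_B:
  assumes R: "valid_ranking_rule n rk" and A: "decr_vec n k \<alpha>" and B: "decr_vec n k \<beta>"
    and SP: "strategy_profile n s"
    and EP: "ex_post_equilibrium n k \<alpha> \<beta> rk s" and E: "efficient n k \<beta> rk s"
    and T: "type_profile n v" and k2: "2 \<le> k" and n3: "3 \<le> n"
    and p: "p \<in> {1..n}" and q: "q \<in> {1..n}" and pq: "p \<noteq> q" and vpq: "v q < v p"
    and oth: "\<forall>d\<in>{1..n} - {p, q}. v d < v q"
  shows "(1 - \<beta> 2) * v q + \<alpha> 2 * Max (bids s v ` ({1..n} - {p, q})) \<le> s p (v p)"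
proof -
  let ?b = "bids s v"
  have r1: "rk ?b p = 1" and r2: "rk ?b q = 2" using eff_top2[OF R B E T k2 p q pq vpq oth] by auto
  have bqp: "?b q \<le> ?b p" using rk1_ge[OF R r1 p q] .
  have bo: "\<forall>d\<in>{1..n} - {p, q}. ?b d \<le> ?b q" using rk2_ge[OF R r1 r2 p q] by blast
  have H3: "jth_highest n ?b 3 = Max (?b ` ({1..n} - {p, q}))"
    using H_two_top(2)[OF p q pq bqp bo n3] .
  have U0: "gsp_utility n k \<alpha> \<beta> rk ?b q (v q) = \<beta> 2 * v q - \<alpha> 2 * Max (?b ` ({1..n} - {p, q}))"
    using util_rank[where rk=rk and b="?b" and i=q and r=2, OF r2 k2] H3 by (simp add: numeral_3_eq_3 numeral_2_eq_2)
  define b' where "b' = ?b(q := ?b p + 1)"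
  have nn: "0 \<le> ?b p + 1" using bids_nonneg[OF SP T p] by simp
  have all: "\<forall>d\<in>{1..n} - {q}. b' d < b' q"
  proof
    fix d assume d: "d \<in> {1..n} - {q}"
    have "?b d \<le> ?b p"
    proof (cases "d = p")
      case False then have "?b d \<le> ?b q" using bo d by auto
      then show ?thesis using bqp by simp
    qed simp
    then show "b' d < b' q" using d unfolding b'_def by simp
  qed
  have r1': "rk b' q = 1" by (rule rk_top[OF R q all])
  have H2': "jth_highest n b' 2 = ?b p"
  proof -
    have "jth_highest n b' 2 = b' p"
    proof (rule H_two_top(1)[OF q p pq[symmetric]])
      show "b' p \<le> b' q" using pq unfolding b'_def by simp
      show "\<forall>d\<in>{1..n} - {q, p}. b' d \<le> b' p"
      proof
        fix d assume d: "d \<in> {1..n} - {q, p}"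
        then have "?b d \<le> ?b q" using bo by auto
        then show "b' d \<le> b' p" using d bqp pq unfolding b'_def by auto
      qed
    qed
    then show ?thesis using pq by (simp add: b'_def)
  qed
  have U1: "gsp_utility n k \<alpha> \<beta> rk b' q (v q) = v q - ?b p"
    using util_rank[where rk=rk and b=b' and i=q and r=1 and k=k, OF r1'] H2' A B k2
    unfolding decr_vec_def by (simp add: numeral_2_eq_2)
  have "gsp_utility n k \<alpha> \<beta> rk b' q (v q) \<le> gsp_utility n k \<alpha> \<beta> rk ?b q (v q)"
    using EP T q nn unfolding ex_post_equilibrium_def b'_def by blast
  then show ?thesis using U0 U1 by (simp add: bids_def algebra_simps)
qed

lemma upper_A:
  assumes R: "valid_ranking_rule n rk" and A: "decr_vec n k \<alpha>" and B: "decr_vec n k \<beta>"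
    and SP: "strategy_profile n s"
    and EP: "ex_post_equilibrium n k \<alpha> \<beta> rk s" and E: "efficient n k \<beta> rk s"
    and T: "type_profile n v" and k2: "2 \<le> k" and n3: "3 \<le> n"
    and p: "p \<in> {1..n}" and q: "q \<in> {1..n}" and pq: "p \<noteq> q" and vpq: "v q < v p"
    and oth: "\<forall>d\<in>{1..n} - {p, q}. v d < v q"
    and strict: "Max (bids s v ` ({1..n} - {p, q})) < s q (v q)"
  shows "s q (v q) \<le> (1 - \<beta> 2) * v p + \<alpha> 2 * Max (bids s v ` ({1..n} - {p, q}))"
proof -
  let ?b = "bids s v"
  let ?O = "{1..n} - {p, q}"
  define M where "M = Max (?b ` ?O)"
  have r1: "rk ?b p = 1" and r2: "rk ?b q = 2" using eff_top2[OF R B E T k2 p q pq vpq oth] by auto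
  have bqp: "?b q \<le> ?b p" using rk1_ge[OF R r1 p q] .
  have bo: "\<forall>d\<in>?O. ?b d \<le> ?b q" using rk2_ge[OF R r1 r2 p q] by blast
  have H2: "jth_highest n ?b 2 = ?b q" using H_two_top(1)[OF p q pq bqp bo] .
  have U0: "gsp_utility n k \<alpha> \<beta> rk ?b p (v p) = v p - ?b q"
    using util_rank[where rk=rk and b="?b" and i=p and r=1 and k=k, OF r1] H2 A B k2
    unfolding decr_vec_def by (simp add: numeral_2_eq_2)
  have One: "?O \<noteq> {}" using others_nonempty[OF n3] .
  have fin: "finite (?b ` ?O)" by simp
  have Mge: "\<forall>d\<in>?O. ?b d \<le> M" unfolding M_def using fin by auto
  obtain d0 where d0: "d0 \<in> ?O" using One by blast
  have M0: "0 \<le> M" using Mge d0 bids_nonneg[OF SP T, of d0] by force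
  have Mq: "M < ?b q" using strict unfolding M_def bids_def by simp
  define c where "c = (M + ?b q) / 2"
  have c: "M < c" "c < ?b q" "0 \<le> c" using Mq M0 unfolding c_def by auto
  define b' where "b' = ?b(p := c)"
  have r2': "rk b' p = 2"
    by (rule rk_second[OF R q p pq[symmetric]])
       (use c pq Mge in \<open>auto simp: b'_def intro: le_less_trans\<close>)
  have img: "b' ` ?O = ?b ` ?O" unfolding b'_def by (auto simp: image_def)
  have H3': "jth_highest n b' 3 = M"
  proof -
    have O': "{1..n} - {q, p} = ?O" by auto
    have "jth_highest n b' 3 = Max (b' ` ({1..n} - {q, p}))"
      proof (rule H_two_top(2)[OF q p pq[symmetric] _ _ n3])
      show "b' p \<le> b' q" using c pq unfolding b'_def by simp
      show "\<forall>d\<in>{1..n} - {q, p}. b' d \<le> b' p"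
      proof
        fix d assume d: "d \<in> {1..n} - {q, p}"
        then have "?b d \<le> M" using Mge O' by blast
        then show "b' d \<le> b' p" using d c unfolding b'_def by auto
      qed
    qed
    then show ?thesis unfolding O' img M_def .
  qed
  have U1: "gsp_utility n k \<alpha> \<beta> rk b' p (v p) = \<beta> 2 * v p - \<alpha> 2 * M"
    using util_rank[where rk=rk and b=b' and i=p and r=2, OF r2' k2] H3' by (simp add: numeral_3_eq_3 numeral_2_eq_2)
  have "gsp_utility n k \<alpha> \<beta> rk b' p (v p) \<le> gsp_utility n k \<alpha> \<beta> rk ?b p (v p)"
    using EP T p c(3) unfolding ex_post_equilibrium_def b'_def by blast
  then show ?thesis using U0 U1 unfolding M_def by (simp add: bids_def algebra_simps)
qed

lemma Max_nonneg:
  assumes SP: "strategy_profile n s" and T: "type_profile n v" and n3: "3 \<le> n"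
  shows "0 \<le> Max (bids s v ` ({1..n} - {p, q}))"
proof -
  obtain d where d: "d \<in> {1..n} - {p, q}" using others_nonempty[OF n3, of p q] by blast
  have "bids s v d \<le> Max (bids s v ` ({1..n} - {p, q}))" using d by (intro Max_ge) auto
  moreover have "0 \<le> bids s v d" using bids_nonneg[OF SP T] d by blast
  ultimately show ?thesis by linarith
qed

lemma impossible:
  assumes R: "valid_ranking_rule n rk" and A: "decr_vec n k \<alpha>" and B: "decr_vec n k \<beta>"
    and k2: "2 \<le> k" and kn: "k \<le> n" and n3: "3 \<le> n"
    and SP: "strategy_profile n s"
    and EP: "ex_post_equilibrium n k \<alpha> \<beta> rk s" and E: "efficient n k \<beta> rk s"
  shows False
proof -
  define \<gamma> where "\<gamma> = 1 - \<beta> 2"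
  define a2 where "a2 = \<alpha> 2"
  have b1: "\<beta> 1 = 1" using B unfolding decr_vec_def by simp
  have "\<beta> 2 < \<beta> 1" using decr_mono[OF B, of 1 2] k2 by simp
  then have g: "0 < \<gamma>" using b1 unfolding \<gamma>_def by simp
  have a2p: "0 < a2" using decr_pos[OF A, of 2] k2 unfolding a2_def by simp
  define Oth where "Oth = {1..n} - {1, 2::nat}"
  have O21: "{1..n} - {2, 1::nat} = Oth" unfolding Oth_def by auto
  have three: "(3::nat) \<in> Oth" using n3 unfolding Oth_def by auto
  have finO: "finite Oth" unfolding Oth_def by simp
  have n1: "(1::nat) \<in> {1..n}" "(2::nat) \<in> {1..n}" "(3::nat) \<in> {1..n}" using n3 by auto
  define Xlo where "Xlo = Max ((\<lambda>d. s d 0) ` Oth)"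
  \<comment> \<open>Step 1: a large bid of agent 3\<close>
  define w where "w = 2 * (max Xlo 0 + 1) / \<gamma>"
  have wpos: "0 < w" using g unfolding w_def by (simp add: field_simps)
  define v1 where "v1 = (\<lambda>d::nat. if d = 3 then w else if d = 1 then w / 2 else 0)"
  have T1: "type_profile n v1" unfolding type_profile_def v1_def using wpos by auto
  have L1: "\<gamma> * v1 1 + a2 * Max (bids s v1 ` ({1..n} - {3, 1})) \<le> s 3 (v1 3)"
    unfolding \<gamma>_def a2_def
    by (rule lower_B[OF R A B SP EP E T1 k2 n3 n1(3) n1(1)]) (use wpos in \<open>auto simp: v1_def\<close>)
  have M1: "0 \<le> Max (bids s v1 ` ({1..n} - {3, 1}))" using Max_nonneg[OF SP T1 n3] .
  have "0 \<le> a2 * Max (bids s v1 ` ({1..n} - {3, 1}))" using M1 a2p by simp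
  moreover have e1: "v1 1 = w / 2" "v1 3 = w" unfolding v1_def by simp_all
  ultimately have "\<gamma> * (w / 2) \<le> s 3 w" using L1[unfolded e1] by linarith
  moreover have "\<gamma> * (w / 2) = max Xlo 0 + 1" unfolding w_def using g by (simp add: field_simps)
  ultimately have s3w: "Xlo + 1 \<le> s 3 w" by linarith
  define Xhi where "Xhi = Max ((\<lambda>d. s d (if d = 3 then w else 0)) ` Oth)"
  have "(\<lambda>d. s d (if d = 3 then w else 0)) 3 \<le> Xhi" unfolding Xhi_def
    by (rule Max_ge[OF finite_imageI[OF finO] imageI[OF three]])
  then have "s 3 w \<le> Xhi" by simp
  then have D: "Xlo + 1 \<le> Xhi" using s3w by simp
  have Xlo0: "0 \<le> Xlo"
  proof -
    have T0: "type_profile n (\<lambda>d. 0)" unfolding type_profile_def by simp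
    have "0 \<le> Max (bids s (\<lambda>d. 0) ` ({1..n} - {1, 2}))" using Max_nonneg[OF SP T0 n3] .
    moreover have "bids s (\<lambda>d. 0) ` ({1..n} - {1, 2}) = (\<lambda>d. s d 0) ` Oth"
      unfolding Oth_def bids_def by simp
    ultimately show ?thesis unfolding Xlo_def by simp
  qed
  define \<delta> where "\<delta> = a2 * (Xhi - Xlo) / (4 * \<gamma>)"
  have dpos: "0 < \<delta>" using a2p g D unfolding \<delta>_def by simp
  have d2: "2 * \<gamma> * \<delta> = a2 * (Xhi - Xlo) / 2" unfolding \<delta>_def using g by (simp add: field_simps)
  define y where "y = w + Xlo / \<gamma> + 1"
  have wy: "w < y" unfolding y_def using Xlo0 g by (simp add: field_simps)
  have gye: "\<gamma> * y = \<gamma> * w + Xlo + \<gamma>" unfolding y_def using g by (simp add: field_simps)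
  have "0 < \<gamma> * w" using g wpos by simp
  then have gy: "Xlo < \<gamma> * y" using gye g by linarith
  define x where "x = y + \<delta>"
  define z where "z = x + \<delta>"
  define v2 where "v2 = (\<lambda>d::nat. if d = 1 then x else if d = 2 then y else if d = 3 then w else 0)"
  have T2: "type_profile n v2" unfolding type_profile_def v2_def x_def using wpos wy dpos by auto
  have L2: "\<gamma> * v2 2 + a2 * Max (bids s v2 ` ({1..n} - {1, 2})) \<le> s 1 (v2 1)"
    unfolding \<gamma>_def a2_def
    by (rule lower_B[OF R A B SP EP E T2 k2 n3 n1(1) n1(2)])
       (use wpos wy dpos in \<open>auto simp: v2_def x_def\<close>)
  have "bids s v2 ` ({1..n} - {1, 2}) = (\<lambda>d. s d (if d = 3 then w else 0)) ` Oth"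
    unfolding Oth_def bids_def v2_def by (rule image_cong) auto
  then have L2': "\<gamma> * y + a2 * Xhi \<le> s 1 x" using L2 unfolding Xhi_def v2_def by simp
  define v3 where "v3 = (\<lambda>d::nat. if d = 2 then z else if d = 1 then x else 0)"
  have x0: "0 < x" unfolding x_def using wpos wy dpos by simp
  have T3: "type_profile n v3" unfolding type_profile_def v3_def z_def using x0 dpos by auto
  have im3: "bids s v3 ` ({1..n} - {2, 1}) = (\<lambda>d. s d 0) ` Oth"
    unfolding O21[symmetric] bids_def v3_def by (rule image_cong) auto
  have Xhi0: "0 \<le> a2 * Xhi" using a2p D Xlo0 by simp
  have strict: "Max (bids s v3 ` ({1..n} - {2, 1})) < s 1 (v3 1)"
    unfolding im3 Xlo_def[symmetric] using L2' gy Xhi0 by (simp add: v3_def)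
  have U3: "s 1 (v3 1) \<le> \<gamma> * v3 2 + a2 * Max (bids s v3 ` ({1..n} - {2, 1}))"
    unfolding \<gamma>_def a2_def
    by (rule upper_A[OF R A B SP EP E T3 k2 n3 n1(2) n1(1) _ _ _ strict[unfolded \<gamma>_def a2_def]])
       (use x0 dpos in \<open>auto simp: v3_def z_def\<close>)
  then have U3': "s 1 x \<le> \<gamma> * z + a2 * Xlo"
    unfolding im3 Xlo_def[symmetric] by (simp add: v3_def)
  have "\<gamma> * y + a2 * Xhi \<le> \<gamma> * (y + 2 * \<delta>) + a2 * Xlo"
    using L2' U3' unfolding z_def x_def by (simp add: algebra_simps)
  then have "a2 * (Xhi - Xlo) \<le> 2 * \<gamma> * \<delta>" by (simp add: algebra_simps)
  then have "a2 * (Xhi - Xlo) \<le> 0" using d2 by simp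
  moreover have "0 < a2 * (Xhi - Xlo)" using a2p D by simp
  ultimately show False by simp
qed

lemma rk_ge1: "valid_ranking_rule n rk \<Longrightarrow> i \<in> {1..n} \<Longrightarrow> 1 \<le> rk b i"
  using rk_in by fastforce

lemma util_k1:
  assumes R: "valid_ranking_rule n rk" and A: "decr_vec n 1 \<alpha>" and B: "decr_vec n 1 \<beta>"
    and i: "i \<in> {1..n}"
  shows "gsp_utility n 1 \<alpha> \<beta> rk c i x = (if rk c i = 1 then x - jth_highest n c 2 else 0)"
proof -
  have "1 \<le> rk c i" using rk_ge1[OF R i] .
  moreover have "\<alpha> 1 = 1" "\<beta> 1 = 1" using A B unfolding decr_vec_def by auto
  ultimately show ?thesis unfolding gsp_utility_def by (auto simp: Let_def numeral_2_eq_2)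
qed

lemma welfare_k1:
  assumes B: "decr_vec n 1 \<beta>" and bij: "bij_betw \<pi> {1..n} {1..n}" and a: "a \<in> {1..n}" "\<pi> a = 1"
  shows "welfare n 1 \<beta> \<pi> v = v a"
proof -
  have b1: "\<beta> 1 = 1" using B unfolding decr_vec_def by auto
  have "welfare n 1 \<beta> \<pi> v = (\<Sum>i\<in>{1..n}. if i = a then v i else 0)"
    unfolding welfare_def
  proof (rule sum.cong)
    fix i assume i: "i \<in> {1..n}"
    have "\<pi> i \<in> {1..n}" using bij_betw_apply[OF bij i] .
    moreover have "\<pi> i = 1 \<longleftrightarrow> i = a"
      using a bij i unfolding bij_betw_def inj_on_def by metis
    ultimately show "(if \<pi> i \<le> 1 then \<beta> (\<pi> i) * v i else 0) = (if i = a then v i else 0)"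
      using b1 by auto
  qed simp
  also have "\<dots> = v a" using a(1) by simp
  finally show ?thesis .
qed

lemma exist_k1:
  assumes R: "valid_ranking_rule n rk" and A: "decr_vec n 1 \<alpha>" and B: "decr_vec n 1 \<beta>"
    and n1: "1 \<le> n"
  shows "strategy_profile n (\<lambda>i x. x) \<and> ex_post_equilibrium n 1 \<alpha> \<beta> rk (\<lambda>i x. x)
     \<and> efficient n 1 \<beta> rk (\<lambda>i x. x)"
proof (intro conjI)
  let ?s = "\<lambda>i x. x :: real"
  have bv: "bids ?s v = v" for v unfolding bids_def by simp
  show "strategy_profile n ?s" unfolding strategy_profile_def by simp
  show "efficient n 1 \<beta> rk ?s"
    unfolding efficient_def bv
  proof (intro allI impI)
    fix v \<pi> assume T: "type_profile n v" and bij: "bij_betw \<pi> {1..n} {1..n}"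
    obtain a where a: "a \<in> {1..n}" "\<pi> a = 1" using bij n1 unfolding bij_betw_def
      by (metis atLeastAtMost_iff imageE order_refl)
    obtain a' where a': "a' \<in> {1..n}" "rk v a' = 1" using rk_surj[OF R, of 1 v] n1 by auto
    have "welfare n 1 \<beta> \<pi> v = v a" using welfare_k1[OF B bij a] .
    also have "\<dots> \<le> v a'" using rk1_ge[OF R a'(2) a'(1) a(1)] .
    also have "\<dots> = welfare n 1 \<beta> (rk v) v" using welfare_k1[OF B rk_bij[OF R] a'] by simp
    finally show "welfare n 1 \<beta> \<pi> v \<le> welfare n 1 \<beta> (rk v) v" .
  qed
  show "ex_post_equilibrium n 1 \<alpha> \<beta> rk ?s"
    unfolding ex_post_equilibrium_def bv
  proof (intro allI impI ballI)
    fix v i and b' :: real assume T: "type_profile n v" and i: "i \<in> {1..n}" and b': "0 \<le> b'"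
    let ?c = "v(i := b')"
    let ?U = "\<lambda>c. gsp_utility n 1 \<alpha> \<beta> rk c i (v i)"
    have U: "?U c = (if rk c i = 1 then v i - jth_highest n c 2 else 0)" for c
      using util_k1[OF R A B i] .
    show "?U ?c \<le> ?U v"
    proof (cases "n = 1")
      case True
      then have "i = 1" using i by simp
      have "rk c i = 1" for c using rk_in[OF R i, of c] True by simp
      moreover have "jth_highest n c 2 = 0" for c unfolding jth_highest_def using True by simp
      ultimately show ?thesis using U by simp
    next
      case False
      then have n2: "2 \<le> n" using n1 by simp
      define Mo where "Mo = Max (v ` ({1..n} - {i}))"
      have H: "jth_highest n c 2 = Mo" if "rk c i = 1" "\<forall>d\<in>{1..n} - {i}. c d = v d" for c
      proof -
        have "jth_highest n c 2 = Max (c ` ({1..n} - {i}))"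
          by (rule H2_top[OF i n2]) (use rk1_ge[OF R that(1) i] in blast)
        also have "c ` ({1..n} - {i}) = v ` ({1..n} - {i})" using that(2) by (intro image_cong) auto
        finally show ?thesis unfolding Mo_def .
      qed
      have Hv: "rk v i = 1 \<Longrightarrow> jth_highest n v 2 = Mo" using H[of v] by simp
      have Hc: "rk ?c i = 1 \<Longrightarrow> jth_highest n ?c 2 = Mo" using H[of ?c] by simp
      have finO: "finite (v ` ({1..n} - {i}))" by simp
      show ?thesis
      proof (cases "rk ?c i = 1")
        case False
        then have "?U ?c = 0" using U by simp
        moreover have "0 \<le> ?U v"
        proof (cases "rk v i = 1")
          case True
          have "Mo \<le> v i" unfolding Mo_def
          proof (rule Max.boundedI[OF finO])
            have "(if i = 1 then 2 else 1) \<in> {1..n} - {i}" using n2 i by auto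
            then show "v ` ({1..n} - {i}) \<noteq> {}" by blast
            show "\<And>y. y \<in> v ` ({1..n} - {i}) \<Longrightarrow> y \<le> v i" using rk1_ge[OF R True i] by blast
          qed
          then show ?thesis using U Hv True by simp
        qed (use U in simp)
        ultimately show ?thesis by simp
      next
        case True
        show ?thesis
        proof (cases "rk v i = 1")
          case True2: True
          then show ?thesis using U Hv Hc True by simp
        next
          case False
          obtain a where a: "a \<in> {1..n}" "rk v a = 1" using rk_surj[OF R, of 1 v] n1 by auto
          have "a \<noteq> i" using a False by auto
          have "v i \<le> v a" using rk1_ge[OF R a(2) a(1) i] .
          also have "v a \<le> Mo" unfolding Mo_def using finO a \<open>a \<noteq> i\<close> by (intro Max_ge) auto
          finally show ?thesis using U Hc True False by simp
        qed
      qed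
    qed
  qed
qed

lemma bij2:
  fixes \<pi> :: "nat \<Rightarrow> nat"
  assumes "bij_betw \<pi> {1..2::nat} {1..2}"
  shows "(\<pi> 1 = 1 \<and> \<pi> 2 = 2) \<or> (\<pi> 1 = 2 \<and> \<pi> 2 = 1)"
proof -
  have "\<pi> 1 \<in> {1..2}" "\<pi> 2 \<in> {1..2}" using bij_betw_apply[OF assms] by auto
  moreover have "\<pi> 1 \<noteq> \<pi> 2"
  proof
    assume h: "\<pi> 1 = \<pi> 2"
    have inj: "inj_on \<pi> {1..2}" using assms bij_betw_def by blast
    have "(1::nat) = 2" by (rule inj_onD[OF inj h]) auto
    then show False by simp
  qed
  ultimately show ?thesis by auto
qed

lemma welfare2:
  fixes \<pi> :: "nat \<Rightarrow> nat"
  assumes "bij_betw \<pi> {1..2::nat} {1..2}"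
  shows "welfare 2 2 \<beta> \<pi> v = \<beta> (\<pi> 1) * v 1 + \<beta> (\<pi> 2) * v 2"
proof -
  have "\<pi> 1 \<le> 2" "\<pi> 2 \<le> 2" using bij_betw_apply[OF assms] by auto
  moreover have "{1..2::nat} = {1, 2}" by auto
  ultimately show ?thesis unfolding welfare_def by simp
qed

lemma exist_n2:
  assumes R: "valid_ranking_rule 2 rk" and A: "decr_vec 2 2 \<alpha>" and B: "decr_vec 2 2 \<beta>"
  shows "strategy_profile 2 (\<lambda>i x. (1 - \<beta> 2) * x) \<and> ex_post_equilibrium 2 2 \<alpha> \<beta> rk (\<lambda>i x. (1 - \<beta> 2) * x)
     \<and> efficient 2 2 \<beta> rk (\<lambda>i x. (1 - \<beta> 2) * x)"
proof -
  define \<gamma> where "\<gamma> = 1 - \<beta> 2"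
  let ?s = "\<lambda>i x. \<gamma> * x"
  have b1: "\<beta> 1 = 1" "\<alpha> 1 = 1" using A B unfolding decr_vec_def by auto
  have "\<beta> 2 < \<beta> 1" using decr_mono[OF B, of 1 2] by simp
  then have g: "0 < \<gamma>" using b1 unfolding \<gamma>_def by simp
  have bs: "bids ?s v d = \<gamma> * v d" for v d unfolding bids_def by simp
  have ranks: "(rk c 1 = 1 \<and> rk c 2 = 2) \<or> (rk c 1 = 2 \<and> rk c 2 = 1)" for c
    using bij2[OF rk_bij[OF R]] by simp
  have U1: "gsp_utility 2 2 \<alpha> \<beta> rk c i x = x - c ot"
    if "i \<in> {1..2}" "ot \<in> {1..2}" "i \<noteq> ot" "rk c i = 1" for c i ot x
  proof -
    have "c ot \<le> c i" using rk1_ge[OF R that(4) that(1) that(2)] .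
    moreover have "{1..2::nat} - {i, ot} = {}" using that(1,2,3) by auto
    then have "\<forall>d\<in>{1..2::nat} - {i, ot}. c d \<le> c ot" by (simp only: ball_empty)
    ultimately have "jth_highest 2 c 2 = c ot"
      using H_two_top(1)[OF that(1) that(2) that(3)] by blast
    then show ?thesis using util_rank[where rk=rk and b=c and i=i and r=1 and k=2, OF that(4)] b1
      by (simp add: numeral_2_eq_2)
  qed
  have U2: "gsp_utility 2 2 \<alpha> \<beta> rk c i x = \<beta> 2 * x" if "rk c i = 2" for c i x
  proof -
    have "jth_highest 2 c 3 = 0" unfolding jth_highest_def by simp
    then show ?thesis using util_rank[where rk=rk and b=c and i=i and r=2 and k=2, OF that] 
      by (simp add: numeral_3_eq_3)
  qed
  have SP: "strategy_profile 2 ?s" unfolding strategy_profile_def using g by simp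
  have EP: "ex_post_equilibrium 2 2 \<alpha> \<beta> rk ?s"
    unfolding ex_post_equilibrium_def
  proof (intro allI impI ballI)
    fix v i and b' :: real assume T: "type_profile 2 v" and i: "i \<in> {1..2::nat}" and b': "0 \<le> b'"
    define ot where "ot = (if i = 1 then 2 else (1::nat))"
    have ot: "ot \<in> {1..2}" "i \<noteq> ot" using i unfolding ot_def by auto
    have io: "i = 1 \<and> ot = 2 \<or> i = 2 \<and> ot = 1" using i unfolding ot_def by auto
    let ?b = "bids ?s v"
    let ?c = "?b(i := b')"
    have rb: "(rk ?b i = 1 \<and> rk ?b ot = 2) \<or> (rk ?b i = 2 \<and> rk ?b ot = 1)"
      using ranks[of ?b] io by auto
    have rc: "rk ?c i = 1 \<or> rk ?c i = 2" using ranks[of ?c] io by auto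
    have Uc: "gsp_utility 2 2 \<alpha> \<beta> rk ?c i (v i) \<le> max (v i - \<gamma> * v ot) (\<beta> 2 * v i)"
      using rc U1[OF i ot(1) ot(2), of ?c] U2[of ?c i] ot(2) bs by auto
    show "gsp_utility 2 2 \<alpha> \<beta> rk ?c i (v i) \<le> gsp_utility 2 2 \<alpha> \<beta> rk ?b i (v i)"
    proof (cases "rk ?b i = 1")
      case True
      have "?b ot \<le> ?b i" using rk1_ge[OF R True i ot(1)] .
      then have "v ot \<le> v i" using g bs by simp
      then have "\<gamma> * v ot \<le> \<gamma> * v i" using g by (simp add: mult_left_mono)
      then have "\<beta> 2 * v i \<le> v i - \<gamma> * v ot" unfolding \<gamma>_def by (simp add: algebra_simps)
      moreover have "gsp_utility 2 2 \<alpha> \<beta> rk ?b i (v i) = v i - \<gamma> * v ot"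
        using U1[OF i ot(1) ot(2) True] bs by simp
      ultimately show ?thesis using Uc by simp
    next
      case False
      then have r: "rk ?b i = 2" "rk ?b ot = 1" using rb by auto
      have "?b i \<le> ?b ot" using rk1_ge[OF R r(2) ot(1) i] .
      then have "v i \<le> v ot" using g bs by simp
      then have "\<gamma> * v i \<le> \<gamma> * v ot" using g by (simp add: mult_left_mono)
      then have "v i - \<gamma> * v ot \<le> \<beta> 2 * v i" unfolding \<gamma>_def by (simp add: algebra_simps)
      moreover have "gsp_utility 2 2 \<alpha> \<beta> rk ?b i (v i) = \<beta> 2 * v i" using U2[OF r(1)] .
      ultimately show ?thesis using Uc by simp
    qed
  qed
  have EF: "efficient 2 2 \<beta> rk ?s"
    unfolding efficient_def
  proof (intro allI impI)
    fix v and \<pi> :: "nat \<Rightarrow> nat" assume T: "type_profile 2 v" and bij: "bij_betw \<pi> {1..2::nat} {1..2}"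
    let ?b = "bids ?s v"
    have W: "welfare 2 2 \<beta> \<pi> v \<le> max (v 1 + \<beta> 2 * v 2) (\<beta> 2 * v 1 + v 2)"
      using bij2[OF bij] welfare2[OF bij] b1 by auto
    have "max (v 1 + \<beta> 2 * v 2) (\<beta> 2 * v 1 + v 2) \<le> welfare 2 2 \<beta> (rk ?b) v"
    proof (cases "rk ?b 1 = 1")
      case True
      then have r2: "rk ?b 2 = 2" using ranks[of ?b] by auto
      have "?b 2 \<le> ?b 1" using rk1_ge[OF R True] by simp
      then have "v 2 \<le> v 1" using g bs by simp
      then have "\<gamma> * v 2 \<le> \<gamma> * v 1" using g by (simp add: mult_left_mono)
      then have "\<beta> 2 * v 1 + v 2 \<le> v 1 + \<beta> 2 * v 2" unfolding \<gamma>_def by (simp add: algebra_simps)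
      then show ?thesis using welfare2[OF rk_bij[OF R], of \<beta> ?b v] True r2 b1 by simp
    next
      case False
      then have r: "rk ?b 1 = 2" "rk ?b 2 = 1" using ranks[of ?b] by auto
      have "?b 1 \<le> ?b 2" using rk1_ge[OF R r(2)] by simp
      then have "v 1 \<le> v 2" using g bs by simp
      then have "\<gamma> * v 1 \<le> \<gamma> * v 2" using g by (simp add: mult_left_mono)
      then have "v 1 + \<beta> 2 * v 2 \<le> \<beta> 2 * v 1 + v 2" unfolding \<gamma>_def by (simp add: algebra_simps)
      then show ?thesis using welfare2[OF rk_bij[OF R], of \<beta> ?b v] r b1 by simp
    qed
    then show "welfare 2 2 \<beta> \<pi> v \<le> welfare 2 2 \<beta> (rk ?b) v" using W by linarith
  qed
  show ?thesis using SP EP EF unfolding \<gamma>_def by simp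
qed

theorem theorem6:
  fixes n k :: nat and \<alpha> \<beta> :: "nat \<Rightarrow> real" and rk :: "(nat \<Rightarrow> real) \<Rightarrow> nat \<Rightarrow> nat"
  assumes "1 \<le> k" and "k \<le> n"
    and "decr_vec n k \<alpha>" and "decr_vec n k \<beta>"
    and "valid_ranking_rule n rk"
  shows "(\<exists>s. strategy_profile n s \<and> ex_post_equilibrium n k \<alpha> \<beta> rk s \<and> efficient n k \<beta> rk s)
         \<longleftrightarrow> (n \<le> 2 \<or> k \<le> 1)"
proof
  assume "\<exists>s. strategy_profile n s \<and> ex_post_equilibrium n k \<alpha> \<beta> rk s \<and> efficient n k \<beta> rk s"
  then obtain s where s: "strategy_profile n s" "ex_post_equilibrium n k \<alpha> \<beta> rk s" "efficient n k \<beta> rk s"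
    by blast
  show "n \<le> 2 \<or> k \<le> 1"
  proof (rule ccontr)
    assume "\<not> (n \<le> 2 \<or> k \<le> 1)"
    then have "3 \<le> n" "2 \<le> k" by auto
    then show False using impossible[OF assms(5,3,4) \<open>2 \<le> k\<close> assms(2) \<open>3 \<le> n\<close> s] by simp
  qed
next
  assume h: "n \<le> 2 \<or> k \<le> 1"
  show "\<exists>s. strategy_profile n s \<and> ex_post_equilibrium n k \<alpha> \<beta> rk s \<and> efficient n k \<beta> rk s"
  proof (cases "k = 1")
    case True
    then show ?thesis using exist_k1[of n rk \<alpha> \<beta>] assms by blast
  next
    case False
    then have "k = 2" "n = 2" using h assms(1,2) by auto
    then show ?thesis using exist_n2[of rk \<alpha> \<beta>] assms by blast
  qed
qed

end
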